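(* Let $F=\{p_0,\ldots,p_n\}\subset\mathbb{R}$ contain at least two distinct points, let $k\ge1$, and consider the homogeneous IFS $S_i(x)=\lambda x+(1-\lambda)p_i$, $i=0,\ldots,n$. Then for every $\lambda\in\big(\max\{(\tfrac12)^{1/(k(n+1)^k)},\theta^{-1/2}\},1\big)$, where $\theta=1.3247\ldots$ is the smallest Pisot number (the real root of $x^3-x-1$), we have $X_k=\mathrm{int}(X)$.
   Context: $\mathcal{D}=\{0,\ldots,n\}$. $X\subset\mathbb{R}$ is the unique non-empty compact set with $X=\bigcup_{i\in\mathcal{D}}S_i(X)$. The coding map is $\pi(\mathbf{a})=\lim_{j\to\infty}(S_{a_1}\circ\cdots\circ S_{a_j})(0)$. For $\mathbf{b}\in\mathcal{D}^k$, $\mathrm{freq}_{\mathbf{b}}(\mathbf{a})=\lim_{m\to\infty}\frac1m\#\{1\le j\le m:a_j\cdots a_{j+k-1}=\mathbf{b}\}$; $\mathbf{a}$ is $k$-simply normal if this equals $(n+1)^{-k}$ for all $\mathbf{b}\in\mathcal{D}^k$. $X_k$ is the set of $x\in X$ having a $k$-simply normal $\mathbf{a}$ with $\pi(\mathbf{a})=x$. *)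

theory Defs
  imports "HOL-Analysis.Analysis"
begin

definition hIFS :: "real \<Rightarrow> (nat \<Rightarrow> real) \<Rightarrow> nat \<Rightarrow> real \<Rightarrow> real" where
  "hIFS lam p i x = lam * x + (1 - lam) * p i"

definition attractor :: "(nat \<Rightarrow> real \<Rightarrow> real) \<Rightarrow> nat \<Rightarrow> real set" where
  "attractor S n = (THE X. compact X \<and> X \<noteq> {} \<and> X = (\<Union>i\<in>{0..n}. S i ` X))"

text \<open>Composition S_{a_1} o ... o S_{a_j}; sequences are indexed from 0 here,
  so a 0 plays the role of a_1.\<close>
fun comp_word :: "(nat \<Rightarrow> real \<Rightarrow> real) \<Rightarrow> (nat \<Rightarrow> nat) \<Rightarrow> nat \<Rightarrow> real \<Rightarrow> real" where
  "comp_word S a 0 = id"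
| "comp_word S a (Suc j) = comp_word S a j \<circ> S (a j)"

definition coding :: "(nat \<Rightarrow> real \<Rightarrow> real) \<Rightarrow> (nat \<Rightarrow> nat) \<Rightarrow> real" where
  "coding S a = lim (\<lambda>j. comp_word S a j 0)"

definition block_count :: "nat list \<Rightarrow> (nat \<Rightarrow> nat) \<Rightarrow> nat \<Rightarrow> nat" where
  "block_count b a m = card {j. j < m \<and> (\<forall>i<length b. a (j + i) = b ! i)}"

definition simply_normal :: "nat \<Rightarrow> nat \<Rightarrow> (nat \<Rightarrow> nat) \<Rightarrow> bool" where
  "simply_normal n k a \<longleftrightarrow>
     (\<forall>b. length b = k \<and> set b \<subseteq> {0..n} \<longrightarrow>
        (\<lambda>m. real (block_count b a m) / real m) \<longlonglongrightarrow> 1 / real (n + 1) ^ k)"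

definition Xk :: "(nat \<Rightarrow> real \<Rightarrow> real) \<Rightarrow> nat \<Rightarrow> nat \<Rightarrow> real set" where
  "Xk S n k = {x \<in> attractor S n. \<exists>a. (\<forall>j. a j \<le> n) \<and> simply_normal n k a \<and> coding S a = x}"

definition pisot_theta :: real where
  "pisot_theta = (THE x::real. x ^ 3 - x - 1 = 0)"

end

theory Submission
  imports Defs
begin
lemma digG:
  fixes X q d e :: nat
  assumes "q > 0" "d < e"
  shows "X mod q^e div q^d mod q = X div q^d mod q"
proof -
  have qe: "q^e = q^d * q^(e-d)" using assms by (simp add: power_add[symmetric])
  have "X mod q^e = q^d * (X div q^d mod q^(e-d)) + X mod q^d"
    unfolding qe by (rule mod_mult2_eq)
  hence "X mod q^e div q^d = X div q^d mod q^(e-d)"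
    using assms by simp
  moreover have "q dvd q^(e-d)" using assms by simp
  ultimately show ?thesis by (simp add: mod_mod_cancel)
qed

lemma digE:
  fixes X q :: nat
  shows "X mod q^k = (\<Sum>t<k. (X div q^t mod q) * q^t)"
proof (induction k)
  case 0 then show ?case by simp
next
  case (Suc k)
  have "X mod q^Suc k = X mod (q^k * q)" by (simp add: mult.commute)
  also have "\<dots> = q^k * (X div q^k mod q) + X mod q^k" by (rule mod_mult2_eq)
  finally show ?case using Suc by (simp add: mult.commute)
qed

definition val :: "nat \<Rightarrow> nat \<Rightarrow> (nat \<Rightarrow> nat) \<Rightarrow> nat" where
  "val q k c = (\<Sum>t<k. c t * q^t)"

lemma val_bound:
  assumes "\<forall>t<k. c t < q"
  shows "val q k c < q^k"
  using assms
proof (induction k)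
  case 0 then show ?case by (simp add: val_def)
next
  case (Suc k)
  have "val q (Suc k) c = val q k c + c k * q^k" by (simp add: val_def)
  also have "\<dots> < q^k + c k * q^k" using Suc by simp
  also have "\<dots> = (c k + 1) * q^k" by simp
  also have "\<dots> \<le> q * q^k" using Suc.prems by (intro mult_right_mono) auto
  finally show ?case by simp
qed

lemma val_digit:
  assumes "\<forall>t<k. c t < q" "t < k"
  shows "val q k c div q^t mod q = c t"
  using assms
proof (induction k)
  case 0 then show ?case by simp
next
  case (Suc k)
  have q0: "q > 0" using Suc.prems by auto
  have vs: "val q (Suc k) c = val q k c + c k * q^k" by (simp add: val_def)
  show ?case
  proof (cases "t < k")
    case True
    have kk: "k = (k-t-1) + 1 + t" using True by simp
    have qk: "q^k = q^(k-t-1) * q * q^t" by (subst kk, simp only: power_add power_one_right)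
    have qt: "q^t \<noteq> 0" using q0 by simp
    have "val q (Suc k) c = val q k c + (c k * q^(k-t-1) * q) * q^t"
      unfolding vs qk by (simp only: mult.assoc)
    hence "val q (Suc k) c div q^t = c k * q^(k-t-1) * q + val q k c div q^t"
      by (simp only: div_mult_self1[OF qt])
    hence "val q (Suc k) c div q^t mod q = val q k c div q^t mod q"
      by (simp only: mod_mult_self3)
    then show ?thesis using Suc True by simp
  next
    case False
    hence tk: "t = k" using Suc.prems by simp
    have "val q k c < q^k" using Suc.prems by (intro val_bound) auto
    moreover have qk: "q^k \<noteq> 0" using q0 by simp
    ultimately have "val q (Suc k) c div q^k = c k" unfolding vs
      by (simp only: div_mult_self1[OF qk] div_less add_0_right)
    then show ?thesis using tk Suc.prems by simp
  qed
qed

lemma val_iff: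
  assumes "\<forall>t<k. c t < q" "W < q^k"
  shows "(\<forall>t<k. W div q^t mod q = c t) \<longleftrightarrow> W = val q k c"
proof
  assume h: "\<forall>t<k. W div q^t mod q = c t"
  have "W = W mod q^k" using assms by simp
  also have "\<dots> = (\<Sum>t<k. (W div q^t mod q) * q^t)" by (rule digE)
  also have "\<dots> = val q k c" unfolding val_def using h by (intro sum.cong) auto
  finally show "W = val q k c" .
next
  assume "W = val q k c"
  then show "\<forall>t<k. W div q^t mod q = c t" using val_digit assms by blast
qed

lemma divmod_blk:
  fixes i k r :: nat
  assumes "r < k"
  shows "(i*k + r) div k = i" "(i*k + r) mod k = r"
proof -
  have k0: "k \<noteq> 0" using assms by simp
  have "(r + i*k) div k = i + r div k" by (rule div_mult_self1[OF k0])
  then show "(i*k + r) div k = i" using assms by (simp add: add.commute)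
  have "(r + i*k) mod k = r mod k" by (rule mod_mult_self1)
  then show "(i*k + r) mod k = r" using assms by (simp add: add.commute)
qed

definition C0 :: "nat \<Rightarrow> nat \<Rightarrow> nat \<Rightarrow> nat" where
  "C0 q k x = ((x mod (k*q^k)) div k) div q^(x mod k) mod q"

definition gg :: "nat \<Rightarrow> nat \<Rightarrow> nat \<Rightarrow> nat \<Rightarrow> nat" where
  "gg q k j i = i div q^j + ((i+1) mod q^j) * q^(k-j)"

lemma C0_window:
  assumes q0: "q > 0" and i: "i < q^k" and j: "j < k" and t: "t < k"
  shows "C0 q k (i*k + j + t) = gg q k j i div q^t mod q"
proof (cases "j + t < k")
  case True
  have x1: "i*k + j + t < k*q^k"
  proof -
    have "i*k + j + t < i*k + k" using True by simp
    also have "\<dots> = (i+1)*k" by simp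
    also have "\<dots> \<le> q^k * k" using i by (intro mult_right_mono) auto
    finally show ?thesis by (simp add: mult.commute)
  qed
  have x2: "(i*k + j + t) div k = i" using divmod_blk[OF True, of i] by (simp add: add.assoc)
  have x3: "(i*k + j + t) mod k = j + t" using divmod_blk[OF True, of i] by (simp add: add.assoc)
  have lhs: "C0 q k (i*k + j + t) = i div q^(j+t) mod q"
    unfolding C0_def using x1 x2 x3 by simp
  have kk: "k - j = (k-j-t-1) + 1 + t" using True by simp
  have qk: "q^(k-j) = q^(k-j-t-1) * q * q^t" by (subst kk, simp only: power_add power_one_right)
  have qt: "q^t \<noteq> 0" using q0 by simp
  have "gg q k j i = i div q^j + (((i+1) mod q^j) * q^(k-j-t-1) * q) * q^t"
    unfolding gg_def qk by (simp only: mult.assoc)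
  hence "gg q k j i div q^t = ((i+1) mod q^j) * q^(k-j-t-1) * q + i div q^j div q^t"
    by (simp only: div_mult_self1[OF qt])
  hence "gg q k j i div q^t mod q = i div q^j div q^t mod q"
    by (simp only: mod_mult_self3)
  also have "\<dots> = i div q^(j+t) mod q" by (simp add: power_add div_mult2_eq)
  finally show ?thesis using lhs by simp
next
  case False
  define t' where "t' = j + t - k"
  have t'j: "t' < j" using False t unfolding t'_def by simp
  have xe: "i*k + j + t = (i+1)*k + t'" using False unfolding t'_def by simp
  have lhs: "C0 q k (i*k + j + t) = (i+1) div q^t' mod q"
  proof (cases "i + 1 < q^k")
    case True
    have x1: "(i+1)*k + t' < k*q^k"
    proof -
      have "(i+1)*k + t' < (i+1)*k + k" using t'j j by simp
      also have "\<dots> = (i+2)*k" by simp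
      also have "\<dots> \<le> q^k * k" using True by (intro mult_right_mono) auto
      finally show ?thesis by (simp add: mult.commute)
    qed
    have tk: "t' < k" using t'j j by simp
    have x2: "((i+1)*k + t') div k = i+1" using divmod_blk[OF tk, of "i+1"] by simp
    have x3: "((i+1)*k + t') mod k = t'" using divmod_blk[OF tk, of "i+1"] by simp
    show ?thesis unfolding xe C0_def using x1 x2 x3 by simp
  next
    case False
    hence ie: "i + 1 = q^k" using i by simp
    have "(i+1)*k + t' = t' + 1 * (k*q^k)" using ie by (simp add: mult.commute)
    hence "((i+1)*k + t') mod (k*q^k) = t'"
    proof -
      have "1 \<le> q^k" using q0 by simp
      hence "k \<le> k * q^k" by simp
      hence "t' < k * q^k" using t'j j by linarith
      then show ?thesis using \<open>(i+1)*k + t' = t' + 1 * (k*q^k)\<close> by simp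
    qed
    hence l0: "C0 q k (i*k + j + t) = 0"
      unfolding xe C0_def using t'j j by simp
    have kk: "k = (k - t' - 1) + 1 + t'" using t'j j by simp
    have "q^k = (q^(k-t'-1) * q) * q^t'" by (subst kk, simp only: power_add power_one_right)
    hence "(i+1) div q^t' = q^(k-t'-1) * q" using ie q0 by simp
    hence "(i+1) div q^t' mod q = 0" by simp
    then show ?thesis using l0 by simp
  qed
  have te: "t = (k-j) + t'" using False j unfolding t'_def by simp
  have idiv: "i div q^j < q^(k-j)"
  proof -
    have "q^k = q^j * q^(k-j)" using j by (simp add: power_add[symmetric])
    then show ?thesis using i q0 by (simp add: less_mult_imp_div_less div_less_iff_less_mult mult.commute)
  qed
  have qkj: "q^(k-j) \<noteq> 0" using q0 by simp
  have "gg q k j i div q^(k-j) = (i+1) mod q^j + i div q^j div q^(k-j)"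
    unfolding gg_def by (simp only: div_mult_self1[OF qkj])
  also have "\<dots> = (i+1) mod q^j" using idiv by simp
  finally have g1: "gg q k j i div q^(k-j) = (i+1) mod q^j" .
  have "gg q k j i div q^t = gg q k j i div q^(k-j) div q^t'"
    unfolding te by (simp only: power_add div_mult2_eq)
  hence "gg q k j i div q^t mod q = (i+1) mod q^j div q^t' mod q" using g1 by simp
  also have "\<dots> = (i+1) div q^t' mod q" using digG[OF q0 t'j] by simp
  finally show ?thesis using lhs by simp
qed

lemma gg_props:
  assumes q0: "q > 0" and j: "j < k"
  shows "inj_on (gg q k j) {..<q^k}" "gg q k j ` {..<q^k} \<subseteq> {..<q^k}"
proof -
  define a where "a = q^j"
  define b where "b = q^(k-j)"
  have qk: "q^k = a * b" unfolding a_def b_def using j by (simp add: power_add[symmetric])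
  have a0: "a > 0" "b > 0" unfolding a_def b_def using q0 by auto
  have g: "gg q k j i = i div a + ((i+1) mod a) * b" for i unfolding gg_def a_def b_def by simp
  have idiv: "i div a < b" if "i < q^k" for i
    using that qk a0 by (simp add: div_less_iff_less_mult mult.commute)
  show "gg q k j ` {..<q^k} \<subseteq> {..<q^k}"
  proof
    fix x assume "x \<in> gg q k j ` {..<q^k}"
    then obtain i where i: "i < q^k" "x = gg q k j i" by auto
    have "(i+1) mod a < a" using a0 by simp
    hence "(i+1) mod a + 1 \<le> a" by simp
    hence "((i+1) mod a + 1) * b \<le> a * b" by (intro mult_right_mono) auto
    moreover have "x < b + ((i+1) mod a) * b" using i idiv g by simp
    ultimately show "x \<in> {..<q^k}" using qk by (simp add: algebra_simps)
  qed
  show "inj_on (gg q k j) {..<q^k}"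
  proof (rule inj_onI)
    fix i i' assume i: "i \<in> {..<q^k}" and i': "i' \<in> {..<q^k}" and e: "gg q k j i = gg q k j i'"
    have m1: "gg q k j x mod b = x div a" if "x < q^k" for x
      using idiv[OF that] g[of x] by simp
    have m2: "gg q k j x div b = (x+1) mod a" if "x < q^k" for x
      using idiv[OF that] g[of x] a0 by simp
    have d: "i div a = i' div a" using m1[of i] m1[of i'] i i' e by simp
    have "(i+1) mod a = (i'+1) mod a" using m2[of i] m2[of i'] i i' e by simp
    moreover have "x mod a = ((x+1) mod a + (a-1)) mod a" for x
    proof -
      have "((x+1) mod a + (a-1)) mod a = (x + 1 + (a-1)) mod a" by (rule mod_add_left_eq)
      also have "x + 1 + (a-1) = x + a" using a0 by simp
      finally show ?thesis by simp
    qed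
    ultimately have "i mod a = i' mod a" by metis
    then show "i = i'" using d by (metis div_mult_mod_eq)
  qed
qed

lemma card_gg_fiber:
  assumes q0: "q > 0" and j: "j < k" and v: "v < q^k"
  shows "card {i. i < q^k \<and> gg q k j i = v} = 1"
proof -
  have surj: "gg q k j ` {..<q^k} = {..<q^k}"
    using gg_props[OF q0 j] by (intro endo_inj_surj) auto
  have "v \<in> gg q k j ` {..<q^k}" using surj v by simp
  then obtain i0 where i0: "i0 < q^k" "gg q k j i0 = v" by auto
  have "{i. i < q^k \<and> gg q k j i = v} = {i0}"
    using i0 gg_props(1)[OF q0 j] unfolding inj_on_def by auto
  then show ?thesis by simp
qed

lemma balance0:
  assumes q0: "q > 0" and k0: "k > 0" and c: "\<forall>t<k. c t < q"
  shows "card {x. x < k*q^k \<and> (\<forall>t<k. C0 q k (x+t) = c t)} = k"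
proof -
  define v where "v = val q k c"
  have v: "v < q^k" unfolding v_def using c by (rule val_bound)
  have key: "(\<forall>t<k. C0 q k (x+t) = c t) \<longleftrightarrow> gg q k (x mod k) (x div k) = v"
    if x: "x < k*q^k" for x
  proof -
    have i: "x div k < q^k" using x k0 by (simp add: div_less_iff_less_mult mult.commute)
    have j: "x mod k < k" using k0 by simp
    have xe: "x = (x div k)*k + x mod k" by simp
    have "(\<forall>t<k. C0 q k (x+t) = c t) \<longleftrightarrow> (\<forall>t<k. gg q k (x mod k) (x div k) div q^t mod q = c t)"
    proof -
      have "C0 q k (x+t) = gg q k (x mod k) (x div k) div q^t mod q" if "t < k" for t
        using C0_window[OF q0 i j that] xe by simp
      then show ?thesis by auto
    qed
    also have "\<dots> \<longleftrightarrow> gg q k (x mod k) (x div k) = v"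
      unfolding v_def
      using val_iff[OF c] gg_props(2)[OF q0 j] i by blast
    finally show ?thesis .
  qed
  have "{x. x < k*q^k \<and> (\<forall>t<k. C0 q k (x+t) = c t)} = {x. x < k*q^k \<and> gg q k (x mod k) (x div k) = v}"
    using key by blast
  also have "card \<dots> = card (SIGMA j:{..<k}. {i. i < q^k \<and> gg q k j i = v})"
  proof (rule bij_betw_same_card)
    define A where "A = {x. x < k*q^k \<and> gg q k (x mod k) (x div k) = v}"
    define B where "B = (SIGMA j:{..<k}. {i. i < q^k \<and> gg q k j i = v})"
    define f where "f = (\<lambda>x::nat. (x mod k, x div k))"
    define f' where "f' = (\<lambda>(j,i). i*k + (j::nat))"
    have l: "\<forall>a\<in>A. f' (f a) = a" unfolding f_def f'_def by simp
    have r: "\<forall>a'\<in>B. f (f' a') = a'" unfolding f_def f'_def B_def using divmod_blk by auto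
    have i1: "f ` A \<subseteq> B" unfolding f_def A_def B_def
      using k0 by (auto simp: div_less_iff_less_mult mult.commute)
    have i2: "f' ` B \<subseteq> A" unfolding f'_def A_def B_def
    proof
      fix y assume "y \<in> (\<lambda>(j,i). i*k + j) ` (SIGMA j:{..<k}. {i. i < q^k \<and> gg q k j i = v})"
      then obtain j i where "j < k" "i < q^k" "gg q k j i = v" and y: "y = i*k+j" by auto
      have "i*k + j < i*k + k" using \<open>j < k\<close> by simp
      also have "\<dots> = (i+1)*k" by simp
      also have "\<dots> \<le> q^k*k" using \<open>i < q^k\<close> by (intro mult_right_mono) auto
      finally show "y \<in> {x. x < k*q^k \<and> gg q k (x mod k) (x div k) = v}"
        using divmod_blk[OF \<open>j < k\<close>, of i] \<open>gg q k j i = v\<close> y by (simp add: mult.commute)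
    qed
    have "bij_betw f A B" by (rule bij_betw_byWitness[OF l r i1 i2])
    then show "bij_betw (\<lambda>x::nat. (x mod k, x div k)) {x. x < k*q^k \<and> gg q k (x mod k) (x div k) = v}
      (SIGMA j:{..<k}. {i. i < q^k \<and> gg q k j i = v})" unfolding f_def A_def B_def .
  qed
  also have "\<dots> = (\<Sum>j<k. card {i. i < q^k \<and> gg q k j i = v})"
    by (rule card_SigmaI) auto
  also have "\<dots> = (\<Sum>j<k. 1)" using card_gg_fiber[OF q0 _ v] by (intro sum.cong) auto
  finally show ?thesis by simp
qed

lemma cw_Suc': "comp_word S a (Suc N) y = comp_word S a N (S (a N) y)" by simp

lemma cw_one: "comp_word S a 1 y = S (a 0) y" by simp

lemma cw_cong: "(\<forall>j<N. a j = b j) \<Longrightarrow> comp_word S a N = comp_word S b N"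
  by (induction N) auto

lemma cw_add: "comp_word S a (N + M) y = comp_word S a N (comp_word S (\<lambda>j. a (N+j)) M y)"
proof (induction M arbitrary: y)
  case 0 then show ?case by simp
next
  case (Suc M)
  have "comp_word S a (N + Suc M) y = comp_word S a (N + M) (S (a (N+M)) y)" by simp
  also have "\<dots> = comp_word S a N (comp_word S (\<lambda>j. a (N+j)) M (S (a (N+M)) y))" by (rule Suc.IH)
  also have "\<dots> = comp_word S a N (comp_word S (\<lambda>j. a (N+j)) (Suc M) y)" by simp
  finally show ?case .
qed

lemma cw_front: "comp_word S a (Suc N) y = S (a 0) (comp_word S (\<lambda>j. a (Suc j)) N y)"
  using cw_add[of S a 1 N y] by simp

lemma cw_formula: "comp_word (hIFS lam p) a N y = lam^N * y + (\<Sum>j<N. (1-lam) * lam^j * p (a j))"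
proof (induction N arbitrary: y)
  case 0 then show ?case by simp
next
  case (Suc N)
  have "comp_word (hIFS lam p) a (Suc N) y = comp_word (hIFS lam p) a N (hIFS lam p (a N) y)" by simp
  also have "\<dots> = lam^N * (hIFS lam p (a N) y) + (\<Sum>j<N. (1-lam) * lam^j * p (a j))"
    by (rule Suc.IH)
  finally show ?case unfolding hIFS_def by (simp add: algebra_simps)
qed

lemma cw_sum: "comp_word (hIFS lam p) a N 0 = (\<Sum>j<N. (1-lam) * lam^j * p (a j))"
  using cw_formula[of lam p a N 0] by simp

lemma cw_affine: "comp_word (hIFS lam p) a N y = lam^N * y + comp_word (hIFS lam p) a N 0"
  unfolding cw_sum by (rule cw_formula)

lemma cw_const: "comp_word (hIFS lam p) (\<lambda>_. d) N y = p d + lam^N * (y - p d)"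
proof (induction N arbitrary: y)
  case 0 then show ?case by simp
next
  case (Suc N)
  have "comp_word (hIFS lam p) (\<lambda>_. d) (Suc N) y = comp_word (hIFS lam p) (\<lambda>_. d) N (hIFS lam p d y)" by simp
  also have "\<dots> = p d + lam^N * (hIFS lam p d y - p d)" by (rule Suc.IH)
  finally show ?case unfolding hIFS_def by (simp add: algebra_simps)
qed

lemma coding_sums:
  assumes a: "\<forall>j. a j \<le> n" and l0: "0 \<le> lam" and l1: "lam < 1"
  shows "summable (\<lambda>j. (1-lam) * lam^j * p (a j))"
    and "(\<lambda>N. comp_word (hIFS lam p) a N 0) \<longlonglongrightarrow> (\<Sum>j. (1-lam) * lam^j * p (a j))"
    and "coding (hIFS lam p) a = (\<Sum>j. (1-lam) * lam^j * p (a j))"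
proof -
  define B where "B = (\<Sum>i\<le>n. \<bar>p i\<bar>)"
  have pb: "\<bar>p (a j)\<bar> \<le> B" for j
    unfolding B_def using a by (intro member_le_sum) auto
  have g: "summable (\<lambda>j. (1-lam) * B * lam^j)"
    using l0 l1 by (intro summable_mult summable_geometric) auto
  have le: "norm ((1-lam) * lam^j * p (a j)) \<le> (1-lam) * B * lam^j" for j
  proof -
    have "norm ((1-lam) * lam^j * p (a j)) = (1-lam) * lam^j * \<bar>p (a j)\<bar>"
      using l0 l1 by (simp add: abs_mult)
    also have "\<dots> \<le> (1-lam) * lam^j * B" using pb l0 l1 by (intro mult_left_mono) auto
    finally show ?thesis by (simp add: algebra_simps)
  qed
  show s: "summable (\<lambda>j. (1-lam) * lam^j * p (a j))"
    by (rule summable_comparison_test'[OF g le])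
  show l: "(\<lambda>N. comp_word (hIFS lam p) a N 0) \<longlonglongrightarrow> (\<Sum>j. (1-lam) * lam^j * p (a j))"
    unfolding cw_sum using summable_LIMSEQ[OF s] by simp
  show "coding (hIFS lam p) a = (\<Sum>j. (1-lam) * lam^j * p (a j))"
    unfolding coding_def using l by (rule limI)
qed

lemma abs_aux:
  fixes a b X y n0 c :: real
  assumes "a + b \<le> X" "X \<le> a + b + c" "n0 + b \<le> y" "y \<le> n0 + b + c" "0 \<le> a" "0 \<le> n0"
  shows "\<bar>y - X\<bar> \<le> n0 + c + a"
  using assms by (simp add: abs_le_iff)

lemma freq_lemma:
  fixes W :: "nat \<Rightarrow> bool"
  assumes L0: "L > 0" and per: "\<forall>t. card {s. s < L \<and> W (N0 + t*L + s)} = c"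
  shows "(\<lambda>m. real (card {j. j < m \<and> W j}) / real m) \<longlonglongrightarrow> real c / real L"
proof -
  define Nf where "Nf m = card {j. j < m \<and> W j}" for m
  have mono: "Nf m \<le> Nf m'" if "m \<le> m'" for m m'
    unfolding Nf_def using that by (intro card_mono) auto
  have step: "Nf (N0 + Suc t * L) = Nf (N0 + t*L) + c" for t
  proof -
    have "{j. j < N0 + Suc t * L \<and> W j} = {j. j < N0 + t*L \<and> W j} \<union> {j. N0 + t*L \<le> j \<and> j < N0 + Suc t * L \<and> W j}"
      by auto
    moreover have "card {j. N0 + t*L \<le> j \<and> j < N0 + Suc t * L \<and> W j} = c"
    proof -
      have "{j. N0 + t*L \<le> j \<and> j < N0 + Suc t * L \<and> W j} = (\<lambda>s. N0 + t*L + s) ` {s. s < L \<and> W (N0 + t*L + s)}"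
      proof (rule set_eqI, rule iffI)
        fix j assume "j \<in> {j. N0 + t*L \<le> j \<and> j < N0 + Suc t * L \<and> W j}"
        then show "j \<in> (\<lambda>s. N0 + t*L + s) ` {s. s < L \<and> W (N0 + t*L + s)}"
          by (intro image_eqI[of _ _ "j - (N0 + t*L)"]) auto
      qed auto
      also have "card \<dots> = card {s. s < L \<and> W (N0 + t*L + s)}"
        by (rule card_image) (simp add: inj_on_def)
      finally show ?thesis using per by simp
    qed
    moreover have "card ({j. j < N0 + t*L \<and> W j} \<union> {j. N0 + t*L \<le> j \<and> j < N0 + Suc t * L \<and> W j})
       = card {j. j < N0 + t*L \<and> W j} + card {j. N0 + t*L \<le> j \<and> j < N0 + Suc t * L \<and> W j}"
      by (rule card_Un_disjoint) auto
    ultimately show ?thesis unfolding Nf_def by simp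
  qed
  have NfT: "Nf (N0 + t * L) = Nf N0 + c * t" for t
  proof (induction t)
    case 0 then show ?case by simp
  next
    case (Suc t) then show ?case using step[of t] by (simp add: algebra_simps)
  qed
  define B where "B = real (Nf N0) + real c + real c * real N0 / real L"
  have bound: "\<bar>real (Nf m) - real c * real m / real L\<bar> \<le> B" if "m \<ge> N0" for m
  proof -
    define t where "t = (m - N0) div L"
    have dm: "t*L + (m - N0) mod L = m - N0" unfolding t_def by (rule div_mult_mod_eq)
    have ml: "(m - N0) mod L < L" using L0 by simp
    have t1: "N0 + t*L \<le> m" using dm that by linarith
    have t2: "m < N0 + Suc t * L" using dm ml that by simp
    have n1: "Nf N0 + c*t \<le> Nf m" using mono[OF t1] NfT by simp
    have n2: "Nf m \<le> Nf N0 + c*t + c" using mono[of m "N0 + Suc t * L"] t2 NfT[of "Suc t"] by simp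
    have r1: "real N0 + real t * real L \<le> real m" using t1 by (metis of_nat_add of_nat_le_iff of_nat_mult)
    have r2: "real m \<le> real N0 + real t * real L + real L" using t2
      by (metis less_imp_le of_nat_add of_nat_le_iff of_nat_mult mult_Suc add.assoc add.commute)
    have Lp: "real L > 0" using L0 by simp
    have e1: "real c * real m / real L \<ge> real c * real N0 / real L + real c * real t"
    proof -
      have "real c * (real N0 + real t * real L) \<le> real c * real m" using r1 by (intro mult_left_mono) auto
      hence "real c * (real N0 + real t * real L) / real L \<le> real c * real m / real L"
        using Lp by (intro divide_right_mono) auto
      moreover have "real c * (real N0 + real t * real L) / real L = real c * real N0 / real L + real c * real t"
        using Lp by (simp add: field_simps)
      ultimately show ?thesis by simp
    qed
    have e2: "real c * real m / real L \<le> real c * real N0 / real L + real c * real t + real c"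
    proof -
      have "real c * real m \<le> real c * (real N0 + real t * real L + real L)" using r2 by (intro mult_left_mono) auto
      hence "real c * real m / real L \<le> real c * (real N0 + real t * real L + real L) / real L"
        using Lp by (intro divide_right_mono) auto
      moreover have "real c * (real N0 + real t * real L + real L) / real L = real c * real N0 / real L + real c * real t + real c"
        using Lp by (simp add: field_simps)
      ultimately show ?thesis by simp
    qed
    have f1: "real (Nf N0) + real c * real t \<le> real (Nf m)" using n1 by (metis of_nat_add of_nat_le_iff of_nat_mult)
    have f2: "real (Nf m) \<le> real (Nf N0) + real c * real t + real c" using n2 by (metis of_nat_add of_nat_le_iff of_nat_mult)
    have nn: "0 \<le> real c * real N0 / real L" using Lp by simp
    have nn2: "0 \<le> real (Nf N0)" by simp
    show ?thesis unfolding B_def using abs_aux[OF e1 e2 f1 f2 nn nn2] .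
  qed
  have "(\<lambda>m. real (Nf m) / real m - real c / real L) \<longlonglongrightarrow> 0"
  proof (rule Lim_null_comparison)
    show "\<forall>\<^sub>F m in sequentially. norm (real (Nf m) / real m - real c / real L) \<le> B * (1 / real m)"
    proof (rule eventually_sequentiallyI[of "N0 + 1"])
      fix m assume m: "N0 + 1 \<le> m"
      hence mp: "real m > 0" by simp
      have "real (Nf m) / real m - real c / real L = (real (Nf m) - real c * real m / real L) / real m"
        using mp by (simp add: field_simps)
      hence "norm (real (Nf m) / real m - real c / real L) = \<bar>real (Nf m) - real c * real m / real L\<bar> / real m"
        using mp by simp
      also have "\<dots> \<le> B / real m" using bound[of m] m mp by (intro divide_right_mono) auto
      finally show "norm (real (Nf m) / real m - real c / real L) \<le> B * (1 / real m)" by simp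
    qed
    show "(\<lambda>m. B * (1 / real m)) \<longlonglongrightarrow> 0"
      using tendsto_mult[OF tendsto_const lim_inverse_n'] by simp
  qed
  then show ?thesis unfolding Nf_def by (rule LIM_zero_cancel)
qed

lemma shift_card:
  fixes P :: "nat \<Rightarrow> bool"
  assumes L0: "L > 0" and per: "\<forall>x. P (x + L) = P x"
  shows "card {s. s < L \<and> P (s + e)} = card {s. s < L \<and> P s}"
proof -
  have pm: "P (x mod L) = P x" for x
  proof (induction x rule: less_induct)
    case (less x)
    show ?case
    proof (cases "x < L")
      case True then show ?thesis by simp
    next
      case False
      then have "x = (x - L) + L" by simp
      then have "P x = P (x - L)" using per by metis
      moreover have "x mod L = (x - L) mod L" using False by (simp add: le_mod_geq)
      ultimately show ?thesis using less[of "x - L"] L0 False by simp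
    qed
  qed
  define f where "f s = (s + e) mod L" for s
  have "bij_betw f {..<L} {..<L}"
  proof -
    have ginv: "((s + e) mod L + (L - e mod L)) mod L = s mod L" for s
    proof -
      have "((s + e) mod L + (L - e mod L)) mod L = (s + e + (L - e mod L)) mod L" by (rule mod_add_left_eq)
      also have "s + e + (L - e mod L) = s + (e div L + 1) * L"
      proof -
        have h1: "e div L * L + e mod L = e" by (rule div_mult_mod_eq)
        have h2: "e mod L < L" using L0 by simp
        have h3: "(e div L + 1) * L = e div L * L + L" by (simp add: distrib_right)
        show ?thesis using h1 h2 h3 by linarith
      qed
      also have "(s + (e div L + 1) * L) mod L = s mod L" by (rule mod_mult_self1)
      finally show ?thesis .
    qed
    have "inj_on f {..<L}"
    proof (rule inj_onI)
      fix s s' assume s: "s \<in> {..<L}" and s': "s' \<in> {..<L}" and "f s = f s'"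
      then have "s mod L = s' mod L" using ginv[of s] ginv[of s'] unfolding f_def by metis
      then show "s = s'" using s s' by simp
    qed
    moreover have "f ` {..<L} \<subseteq> {..<L}" unfolding f_def using L0 by auto
    ultimately show ?thesis using endo_inj_surj[of "{..<L}" f] unfolding bij_betw_def by auto
  qed
  then have imgf: "f ` {..<L} = {..<L}" and injf: "inj_on f {..<L}" unfolding bij_betw_def by auto
  have b2: "bij_betw f {s. s < L \<and> P (s + e)} {s. s < L \<and> P s}"
  proof -
    have "f ` {s. s < L \<and> P (s + e)} = {s. s < L \<and> P s}"
    proof
      show "f ` {s. s < L \<and> P (s + e)} \<subseteq> {s. s < L \<and> P s}"
      proof
        fix y assume "y \<in> f ` {s. s < L \<and> P (s + e)}"
        then obtain s where s: "s < L" "P (s + e)" "y = f s" by blast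
        have "P y" using pm[of "s+e"] s unfolding f_def by simp
        moreover have "y < L" using s L0 unfolding f_def by simp
        ultimately show "y \<in> {s. s < L \<and> P s}" by simp
      qed
      show "{s. s < L \<and> P s} \<subseteq> f ` {s. s < L \<and> P (s + e)}"
      proof
        fix x assume x: "x \<in> {s. s < L \<and> P s}"
        then have "x \<in> f ` {..<L}" using imgf by simp
        then obtain s where s: "s < L" "x = f s" by blast
        have "P (s + e)" using x s pm[of "s+e"] unfolding f_def by simp
        then show "x \<in> f ` {s. s < L \<and> P (s + e)}" using s by blast
      qed
    qed
    moreover have "inj_on f {s. s < L \<and> P (s + e)}"
      using injf by (rule inj_on_subset) auto
    ultimately show ?thesis unfolding bij_betw_def by simp
  qed
  then show ?thesis by (rule bij_betw_same_card)
qed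

locale hsetup =
  fixes p :: "nat \<Rightarrow> real" and n k :: nat and lam m M :: real and i0 i1 :: nat
  assumes k0: "k > 0" and lam0: "0 < lam" and lam1: "lam < 1"
    and rL: "lam ^ (k * (n+1)^k) > 1/2"
    and i0: "i0 \<le> n" and i1: "i1 \<le> n" and pi0: "p i0 = m" and pi1: "p i1 = M" and mM: "m < M"
    and pr: "\<forall>i\<le>n. m \<le> p i \<and> p i \<le> M"
begin

abbreviation S where "S \<equiv> hIFS lam p"
definition q where "q = n+1"
definition L where "L = k * q^k"
definition r where "r = lam^L"
definition tau where "tau d = (if d = 0 then i0 else if d = i0 then 0 else d)"
definition Cc where "Cc x = tau (C0 q k x)"

lemma q_pos: "q > 0" unfolding q_def by simp
lemma L_pos: "L > 0" unfolding L_def using k0 q_pos by simp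
lemma k_le_L: "k \<le> L" unfolding L_def using q_pos by simp
lemma r_gt: "r > 1/2" using rL unfolding r_def L_def q_def by simp
lemma r_lt: "r < 1" unfolding r_def using lam0 lam1 L_pos by (simp add: power_less_one_iff)
lemma r_pos: "r > 0" using r_gt by simp
lemma lam_ge_r: "lam^s \<ge> r" if "s \<le> L" for s
  unfolding r_def using that lam0 lam1 by (intro power_decreasing) auto

lemma tau_tau: "tau (tau d) = d" unfolding tau_def by auto
lemma tau_le: "d \<le> n \<Longrightarrow> tau d \<le> n" unfolding tau_def using i0 by auto

lemma Cc_le: "Cc x \<le> n"
proof -
  have "C0 q k x < q" unfolding C0_def using q_pos by simp
  then show ?thesis unfolding Cc_def q_def using tau_le by simp
qed

lemma Cc_per: "Cc (x + L) = Cc x"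
  unfolding Cc_def C0_def L_def by simp

lemma Cc_perm: "Cc (t*L + x) = Cc x"
proof (induction t)
  case 0 then show ?case by simp
next
  case (Suc t)
  have "Suc t * L + x = (t*L + x) + L" by simp
  then show ?case using Cc_per Suc.IH by metis
qed

lemma Cc_start: "x < k \<Longrightarrow> Cc x = i0"
proof -
  assume x: "x < k"
  have "x < k * q^k" using x k_le_L unfolding L_def by (meson less_le_trans)
  then have "C0 q k x = 0" unfolding C0_def using x by simp
  then show ?thesis unfolding Cc_def tau_def by simp
qed

lemma balance:
  assumes b: "length b = k" "set b \<subseteq> {0..n}"
  shows "card {x. x < L \<and> (\<forall>i<k. Cc (x+i) = b!i)} = k"
proof -
  define c where "c t = tau (b!t)" for t
  have c: "\<forall>t<k. c t < q"
  proof (intro allI impI)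
    fix t assume "t < k"
    then have "b!t \<le> n" using b nth_mem by fastforce
    then show "c t < q" unfolding c_def q_def using tau_le by (simp add: le_imp_less_Suc)
  qed
  have "(\<forall>i<k. Cc (x+i) = b!i) \<longleftrightarrow> (\<forall>i<k. C0 q k (x+i) = c i)" for x
    unfolding Cc_def c_def by (metis tau_tau)
  then have "{x. x < L \<and> (\<forall>i<k. Cc (x+i) = b!i)} = {x. x < k*q^k \<and> (\<forall>t<k. C0 q k (x+t) = c t)}"
    unfolding L_def by auto
  then show ?thesis using balance0[OF q_pos k0 c] by simp
qed

definition Wm where "Wm e y = comp_word S (\<lambda>s. Cc (s + e)) L y"

lemma Wm_aff: "Wm e y = r * y + Wm e 0"
  unfolding Wm_def r_def by (rule cw_affine)

definition fA where "fA = Wm 0 0 / (1 - r)"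
definition fB where "fB = Wm 1 0 / (1 - r)"

lemma fix_unique: "Wm e z = z \<Longrightarrow> z = Wm e 0 / (1 - r)"
proof -
  assume "Wm e z = z"
  then have "r * z + Wm e 0 = z" using Wm_aff by metis
  then have "Wm e 0 = (1 - r) * z" by (simp add: algebra_simps)
  then show ?thesis using r_lt by simp
qed

lemma Wm0_fA: "Wm 0 y = fA + r * (y - fA)"
proof -
  have ne: "1 - r \<noteq> 0" using r_lt by simp
  have "(1-r) * fA = Wm 0 0" unfolding fA_def using ne by simp
  then have h: "Wm 0 0 = fA - r*fA" by (simp add: algebra_simps)
  have "fA + r * (y - fA) = fA + r*y - r*fA" by (simp add: algebra_simps)
  then show ?thesis using Wm_aff[of 0 y] h by linarith
qed
lemma Wm1_fB: "Wm 1 y = fB + r * (y - fB)"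
proof -
  have ne: "1 - r \<noteq> 0" using r_lt by simp
  have "(1-r) * fB = Wm 1 0" unfolding fB_def using ne by simp
  then have h: "Wm 1 0 = fB - r*fB" by (simp add: algebra_simps)
  have "fB + r * (y - fB) = fB + r*y - r*fB" by (simp add: algebra_simps)
  then show ?thesis using Wm_aff[of 1 y] h by linarith
qed

lemma comm: "Wm 0 (S i0 y) = S i0 (Wm 1 y)"
proof -
  obtain L' where L': "L = Suc L'" using L_pos by (metis Suc_pred)
  have c0: "Cc 0 = i0" using Cc_start k0 by simp
  have cL: "Cc (L' + 1) = i0" using L' Cc_per[of 0] c0 by simp
  have "Wm 0 (S i0 y) = comp_word S (\<lambda>s. Cc (s + 0)) (Suc L') (S i0 y)"
    unfolding Wm_def L' by (rule refl)
  also have "\<dots> = S (Cc (0 + 0)) (comp_word S (\<lambda>j. Cc (Suc j + 0)) L' (S i0 y))"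
    by (rule cw_front)
  also have "(\<lambda>j. Cc (Suc j + 0)) = (\<lambda>s. Cc (s + 1))" by simp
  also have "comp_word S (\<lambda>s. Cc (s + 1)) L' (S i0 y) = Wm 1 y"
  proof -
    have "Wm 1 y = comp_word S (\<lambda>s. Cc (s + 1)) (Suc L') y"
      unfolding Wm_def L' by (rule refl)
    also have "\<dots> = comp_word S (\<lambda>s. Cc (s + 1)) L' (S (Cc (L' + 1)) y)" by (rule cw_Suc')
    finally show ?thesis using cL by simp
  qed
  finally show ?thesis using c0 by simp
qed

lemma fA_eq: "fA = S i0 fB"
proof -
  have "Wm 1 fB = fB" using Wm1_fB by simp
  then have "Wm 0 (S i0 fB) = S i0 fB" using comm by simp
  then show ?thesis using fix_unique[of 0] unfolding fA_def by metis
qed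

lemma fA_m: "fA - m = lam * (fB - m)"
  using fA_eq pi0 unfolding hIFS_def by (simp add: algebra_simps)

end

context hsetup
begin

lemma geo: "(\<Sum>s<N. (1-lam) * lam^s) = 1 - lam^N"
proof -
  have "(\<Sum>s<N. (1-lam) * lam^s) = (1-lam) * (\<Sum>s<N. lam^s)" by (simp add: sum_distrib_left)
  also have "\<dots> = 1 - lam^N" using lam1 by (simp add: sum_gp_strict)
  finally show ?thesis .
qed

lemma exists_i1: "\<exists>s0<L. Cc (s0 + 1) = i1"
proof -
  define A where "A = {x. x < L \<and> (\<forall>i<k. Cc (x+i) = replicate k i1 ! i)}"
  have "card A = k" unfolding A_def using i1 by (intro balance) auto
  then have "A \<noteq> {}" using k0 by (intro notI) simp
  then obtain x where "x \<in> A" by blast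
  then have x: "x < L" and xx: "\<forall>i<k. Cc (x+i) = replicate k i1 ! i" unfolding A_def by auto
  have "Cc (x + 0) = replicate k i1 ! 0" using xx k0 by blast
  then have cx: "Cc x = i1" using k0 by simp
  have "i0 \<noteq> i1" using pi0 pi1 mM by auto
  moreover have "Cc 0 = i0" using Cc_start k0 by simp
  ultimately have "x \<noteq> 0" using cx by metis
  then have "Cc (x - 1 + 1) = i1" using cx by simp
  moreover have "x - 1 < L" using x by simp
  ultimately show ?thesis by blast
qed

lemma fB_big: "fB - m > (1 - lam) * (M - m)"
proof -
  have W1: "Wm 1 0 = (\<Sum>s<L. (1-lam) * lam^s * p (Cc (s + 1)))"
    unfolding Wm_def by (rule cw_sum)
  have ne: "1 - r \<noteq> 0" using r_lt by simp
  have "(1 - r) * fB = Wm 1 0" unfolding fB_def using ne by simp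
  moreover have "(1 - r) * m = (\<Sum>s<L. (1-lam) * lam^s * m)"
  proof -
    have "(\<Sum>s<L. (1-lam) * lam^s * m) = (\<Sum>s<L. (1-lam) * lam^s) * m" by (simp add: sum_distrib_right)
    then show ?thesis using geo[of L] unfolding r_def by simp
  qed
  have e: "(1 - r) * (fB - m) = (\<Sum>s<L. (1-lam) * lam^s * (p (Cc (s + 1)) - m))"
  proof -
    have "(\<Sum>s<L. (1-lam) * lam^s * (p (Cc (s + 1)) - m)) = (\<Sum>s<L. (1-lam) * lam^s * p (Cc (s + 1))) - (\<Sum>s<L. (1-lam) * lam^s * m)"
      by (simp add: right_diff_distrib sum_subtractf)
    moreover have "(1 - r) * (fB - m) = (1 - r) * fB - (1 - r) * m" by (simp add: algebra_simps)
    ultimately show ?thesis using W1 \<open>(1 - r) * fB = Wm 1 0\<close> \<open>(1 - r) * m = (\<Sum>s<L. (1-lam) * lam^s * m)\<close>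
      by linarith
  qed
  obtain s0 where s0: "s0 < L" "Cc (s0 + 1) = i1" using exists_i1 by blast
  have nn: "\<forall>s\<in>{..<L}. 0 \<le> (1-lam) * lam^s * (p (Cc (s + 1)) - m)"
    using pr Cc_le lam0 lam1 by auto
  have "(1-lam) * lam^s0 * (p (Cc (s0 + 1)) - m) \<le> (\<Sum>s<L. (1-lam) * lam^s * (p (Cc (s + 1)) - m))"
    using s0(1) nn by (intro member_le_sum) auto
  moreover have "(1-lam) * lam^s0 * (p (Cc (s0 + 1)) - m) = (1-lam) * (M - m) * lam^s0"
    using s0 pi1 by simp
  moreover have "(1-lam) * (M - m) * r \<le> (1-lam) * (M - m) * lam^s0"
    using lam_ge_r[of s0] s0 lam1 mM by (intro mult_left_mono) auto
  ultimately have "(1-lam) * (M - m) * r \<le> (1 - r) * (fB - m)" using e by linarith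
  moreover have "(1-lam) * (M - m) * (1 - r) < (1-lam) * (M - m) * r"
    using r_gt lam1 mM by (intro mult_strict_left_mono) auto
  ultimately have "(1 - r) * ((1-lam) * (M - m)) < (1 - r) * (fB - m)" by (simp add: algebra_simps)
  then show ?thesis using r_lt by (simp add: mult_less_cancel_left_pos)
qed

lemma fB_gt_m: "fB > m"
proof -
  have "(1 - lam) * (M - m) > 0" using lam1 mM by simp
  then show ?thesis using fB_big by simp
qed

lemma fA_lt_fB: "fA < fB"
proof -
  have "fB - fA = (1 - lam) * (fB - m)" using fA_m by (simp add: algebra_simps)
  moreover have "(1 - lam) * (fB - m) > 0" using lam1 fB_gt_m by simp
  ultimately show ?thesis by simp
qed

lemma strategy:
  assumes y: "y \<in> {fA..fB}"
  shows "\<exists>e y'. e \<le> (1::nat) \<and> y' \<in> {fA..fB} \<and> Wm e y' = y"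
proof (cases "y \<le> fA + r * (fB - fA)")
  case True
  define y' where "y' = fA + (y - fA) / r"
  have "Wm 0 y' = y" unfolding Wm0_fA y'_def using r_pos by simp
  moreover have "y' \<in> {fA..fB}"
  proof -
    have "(y - fA) / r \<ge> 0" using y r_pos by simp
    moreover have "(y - fA) / r \<le> fB - fA"
    proof -
      have "y - fA \<le> r * (fB - fA)" using True by simp
      then show ?thesis using r_pos by (simp add: divide_le_eq mult.commute)
    qed
    ultimately show ?thesis unfolding y'_def by simp
  qed
  ultimately show ?thesis by (intro exI[of _ 0] exI[of _ y']) auto
next
  case False
  define y' where "y' = fB - (fB - y) / r"
  have "Wm 1 y' = y" unfolding Wm1_fB y'_def using r_pos by simp
  moreover have "y' \<in> {fA..fB}"
  proof -
    have "(fB - y) / r \<ge> 0" using y r_pos by simp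
    moreover have "fB - y \<le> r * (fB - fA)"
    proof -
      have "fB - y < (1 - r) * (fB - fA)" using False by (simp add: algebra_simps)
      also have "\<dots> \<le> r * (fB - fA)" using r_gt fA_lt_fB by (intro mult_right_mono) auto
      finally show ?thesis by simp
    qed
    then have "(fB - y) / r \<le> fB - fA" using r_pos by (simp add: divide_le_eq mult.commute)
    ultimately show ?thesis unfolding y'_def by simp
  qed
  ultimately show ?thesis by (intro exI[of _ 1] exI[of _ y']) auto
qed

end

context hsetup
begin

lemma K_seq:
  assumes y0: "y0 \<in> {fA..fB}"
  shows "\<exists>e z. (\<forall>t. e t \<le> (1::nat)) \<and> (\<forall>t. z t \<in> {fA..fB}) \<and> z 0 = y0 \<and> (\<forall>t. Wm (e t) (z (Suc t)) = z t)"
proof -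
  have "\<forall>y\<in>{fA..fB}. \<exists>ey. fst ey \<le> (1::nat) \<and> snd ey \<in> {fA..fB} \<and> Wm (fst ey) (snd ey) = y"
    using strategy by fastforce
  then obtain F where F: "\<forall>y\<in>{fA..fB}. fst (F y) \<le> (1::nat) \<and> snd (F y) \<in> {fA..fB} \<and> Wm (fst (F y)) (snd (F y)) = y"
    by metis
  define z where "z = rec_nat y0 (\<lambda>_ y. snd (F y))"
  have z0: "z 0 = y0" unfolding z_def by simp
  have zS: "z (Suc t) = snd (F (z t))" for t unfolding z_def by simp
  have zK: "z t \<in> {fA..fB}" for t
  proof (induction t)
    case 0 then show ?case using z0 y0 by simp
  next
    case (Suc t) then show ?case using zS F by simp
  qed
  define e where "e t = fst (F (z t))" for t
  show ?thesis
    by (rule exI[of _ e], rule exI[of _ z]) (use zK F zS z0 in \<open>auto simp: e_def\<close>)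
qed

definition aseq where "aseq e j = Cc (j + e (j div L))"

lemma aseq_blk: "s < L \<Longrightarrow> aseq e (t*L + s) = Cc (s + e t)"
proof -
  assume s: "s < L"
  have "(t*L + s) div L = t" using divmod_blk[OF s] by simp
  then have "aseq e (t*L + s) = Cc (t*L + (s + e t))" unfolding aseq_def by (simp add: add.assoc)
  then show ?thesis using Cc_perm by simp
qed

lemma aseq_cw:
  assumes ez: "\<forall>t. Wm (e t) (z (Suc t)) = z t"
  shows "comp_word S (aseq e) (t*L) (z t) = z 0"
proof (induction t)
  case 0 then show ?case by simp
next
  case (Suc t)
  have "comp_word S (\<lambda>j. aseq e (t*L + j)) L = comp_word S (\<lambda>s. Cc (s + e t)) L"
    by (rule cw_cong) (simp add: aseq_blk)
  then have "comp_word S (\<lambda>j. aseq e (t*L + j)) L (z (Suc t)) = z t"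
    using ez unfolding Wm_def by simp
  moreover have "comp_word S (aseq e) (t*L + L) (z (Suc t)) = comp_word S (aseq e) (t*L) (comp_word S (\<lambda>j. aseq e (t*L + j)) L (z (Suc t)))"
    by (rule cw_add)
  ultimately have "comp_word S (aseq e) (t*L + L) (z (Suc t)) = z 0" using Suc.IH by simp
  moreover have eqL: "Suc t * L = t*L + L" by simp
  ultimately show ?case by (simp only: eqL)
qed

lemma aseq_win:
  assumes e: "\<forall>t. e t \<le> (1::nat)" and s: "s < L" and i: "i < k"
  shows "aseq e (t*L + s + i) = Cc (s + i + e t)"
proof (cases "s + i < L")
  case True
  then show ?thesis using aseq_blk[OF True, of e t] by (simp add: add.assoc)
next
  case False
  define d where "d = s + i - L"
  have dk: "d + 1 < k" unfolding d_def using s i False by simp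
  have dL: "d < L" using dk k_le_L by simp
  have eq: "t*L + s + i = Suc t * L + d" unfolding d_def using False by simp
  have "aseq e (t*L + s + i) = Cc (d + e (Suc t))" unfolding eq by (rule aseq_blk[OF dL])
  also have "\<dots> = i0" using dk e[rule_format, of "Suc t"] by (intro Cc_start) linarith
  finally have l: "aseq e (t*L + s + i) = i0" .
  have eq2: "s + i + e t = (d + e t) + L" unfolding d_def using False by simp
  have "Cc (s + i + e t) = Cc (d + e t)" unfolding eq2 by (rule Cc_per)
  also have "\<dots> = i0" using dk e[rule_format, of t] by (intro Cc_start) linarith
  finally show ?thesis using l by simp
qed

lemma bottom:
  assumes x: "m < x" "x \<le> fB"
  shows "\<exists>j y0. y0 \<in> {fA..fB} \<and> x = m + lam^j * (y0 - m)"
proof -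
  define A where "A = fB - m"
  have A: "A > 0" unfolding A_def using fB_gt_m by simp
  define P where "P n = (lam^n * A \<le> x - m)" for n
  obtain n0 where "lam^n0 < (x - m) / A" using real_arch_pow_inv[of "(x - m)/A" lam] x A lam1 by auto
  then have "P n0" unfolding P_def using A by (simp add: field_simps)
  define N where "N = (LEAST n. P n)"
  have PN: "P N" unfolding N_def using \<open>P n0\<close> by (rule LeastI)
  show ?thesis
  proof (cases N)
    case 0
    then have "x = fB" using PN x unfolding P_def A_def by simp
    then show ?thesis using fA_lt_fB by (intro exI[of _ 0] exI[of _ fB]) auto
  next
    case (Suc j)
    have nP: "\<not> P j" unfolding N_def using Suc not_less_Least[of j P] N_def by simp
    have lj: "lam^j > 0" using lam0 by simp
    define y0 where "y0 = m + (x - m) / lam^j"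
    have "lam^j * (y0 - m) = x - m" unfolding y0_def using lj lam0 by simp
    then have xe: "x = m + lam^j * (y0 - m)" by simp
    have "(x - m) / lam^j < A" using nP lj unfolding P_def by (simp add: divide_less_eq mult.commute)
    then have "y0 < fB" unfolding y0_def A_def by simp
    moreover have "lam * A \<le> (x - m) / lam^j"
      using PN Suc lj unfolding P_def by (simp add: le_divide_eq algebra_simps)
    then have "fA \<le> y0" unfolding y0_def using fA_m A_def by simp
    ultimately show ?thesis using xe by (intro exI[of _ j] exI[of _ y0]) auto
  qed
qed

lemma top:
  assumes x: "fB < x" "x < M"
  shows "\<exists>j z. m < z \<and> z \<le> fB \<and> x = M + lam^j * (z - M)"
proof -
  define D where "D = M - fB"
  have D: "D > 0" unfolding D_def using x by simp
  have Dl: "D < lam * (M - m)" unfolding D_def using fB_big by (simp add: algebra_simps)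
  define P where "P n = (lam^n * D \<le> M - x)" for n
  obtain n0 where "lam^n0 < (M - x) / D" using real_arch_pow_inv[of "(M - x)/D" lam] x D lam1 by auto
  then have "P n0" unfolding P_def using D by (simp add: field_simps)
  define N where "N = (LEAST n. P n)"
  have PN: "P N" unfolding N_def using \<open>P n0\<close> by (rule LeastI)
  have "N \<noteq> 0"
  proof
    assume "N = 0"
    then have "D \<le> M - x" using PN unfolding P_def by simp
    then show False using x unfolding D_def by simp
  qed
  then obtain j where Sj: "N = Suc j" by (cases N) auto
  have nP: "\<not> P j" unfolding N_def using Sj not_less_Least[of j P] N_def by simp
  have lj: "lam^j > 0" "lam^Suc j > 0" using lam0 by auto
  define z where "z = M - (M - x) / lam^Suc j"
  have "lam^Suc j * (z - M) = x - M" unfolding z_def using lj lam0 by simp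
  then have xe: "x = M + lam^Suc j * (z - M)" by simp
  have "D \<le> (M - x) / lam^Suc j" using PN Sj lj unfolding P_def by (simp add: le_divide_eq mult.commute)
  then have z1: "z \<le> fB" unfolding z_def D_def by simp
  have "M - x < lam^j * D" using nP unfolding P_def by simp
  also have "\<dots> \<le> lam^j * (lam * (M - m))" using Dl lj by (intro mult_left_mono) auto
  also have "\<dots> = lam^Suc j * (M - m)" by simp
  finally have "(M - x) / lam^Suc j < M - m" using lj by (simp add: divide_less_eq mult.commute)
  then have z2: "m < z" unfolding z_def by simp
  show ?thesis using xe z1 z2 by blast
qed

lemma reach:
  assumes x: "m < x" "x < M"
  shows "\<exists>j1 j0 y0. y0 \<in> {fA..fB} \<and> x = M + lam^j1 * ((m + lam^j0 * (y0 - m)) - M)"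
proof -
  obtain j1 z where z: "m < z" "z \<le> fB" and xz: "x = M + lam^j1 * (z - M)"
  proof (cases "x \<le> fB")
    case True
    then show ?thesis using that[of x 0] x by simp
  next
    case False
    then show ?thesis using top[of x] x that by auto
  qed
  obtain j0 y0 where "y0 \<in> {fA..fB}" "z = m + lam^j0 * (y0 - m)" using bottom[OF z] by blast
  then show ?thesis using xz by blast
qed

end

context hsetup
begin

lemma interior_good:
  assumes x: "m < x" "x < M"
  shows "\<exists>a. (\<forall>j. a j \<le> n) \<and> simply_normal n k a \<and> coding S a = x"
proof -
  obtain j1 j0 y0 where y0: "y0 \<in> {fA..fB}" and xe: "x = M + lam^j1 * ((m + lam^j0 * (y0 - m)) - M)"
    using reach[OF x] by blast
  obtain e z where e: "\<forall>t. e t \<le> (1::nat)" and zK: "\<forall>t. z t \<in> {fA..fB}" and z0: "z 0 = y0"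
    and ez: "\<forall>t. Wm (e t) (z (Suc t)) = z t"
    using K_seq[OF y0] by blast
  define N0 where "N0 = j1 + j0"
  define a where "a j = (if j < j1 then i1 else if j < N0 then i0 else aseq e (j - N0))" for j
  have dig: "\<forall>j. a j \<le> n" unfolding a_def aseq_def using i0 i1 Cc_le by auto
  have tail: "(\<lambda>j. a (N0 + j)) = aseq e" unfolding a_def N0_def by (rule ext) simp
  have pre: "comp_word S a N0 w = M + lam^j1 * ((m + lam^j0 * (w - m)) - M)" for w
  proof -
    have c1: "comp_word S a j1 = comp_word S (\<lambda>_. i1) j1" by (rule cw_cong) (simp add: a_def)
    have c2: "comp_word S (\<lambda>j. a (j1 + j)) j0 = comp_word S (\<lambda>_. i0) j0"
      by (rule cw_cong) (simp add: a_def N0_def)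
    have "comp_word S a N0 w = comp_word S a j1 (comp_word S (\<lambda>j. a (j1 + j)) j0 w)"
      unfolding N0_def by (rule cw_add)
    also have "\<dots> = comp_word S (\<lambda>_. i1) j1 (comp_word S (\<lambda>_. i0) j0 w)" using c1 c2 by simp
    finally show ?thesis using cw_const pi0 pi1 by simp
  qed
  have full: "comp_word S a (N0 + t*L) (z t) = x" for t
  proof -
    have "comp_word S a (N0 + t*L) (z t) = comp_word S a N0 (comp_word S (\<lambda>j. a (N0 + j)) (t*L) (z t))"
      by (rule cw_add)
    also have "comp_word S (\<lambda>j. a (N0 + j)) (t*L) (z t) = y0" using aseq_cw[OF ez] z0 tail by simp
    finally show ?thesis using pre xe by simp
  qed
  have sub0: "comp_word S a (N0 + t*L) 0 = x - lam^(N0 + t*L) * z t" for t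
    using cw_affine[of lam p a "N0 + t*L" "z t"] full[of t] by simp
  have cs: "(\<lambda>N. comp_word S a N 0) \<longlonglongrightarrow> (\<Sum>j. (1-lam) * lam^j * p (a j))"
    and cd: "coding S a = (\<Sum>j. (1-lam) * lam^j * p (a j))"
    using coding_sums[OF dig, of lam p] lam0 lam1 by auto
  have sm: "strict_mono (\<lambda>t. N0 + t*L)" using L_pos by (intro strict_monoI) simp
  have l1: "(\<lambda>t. comp_word S a (N0 + t*L) 0) \<longlonglongrightarrow> (\<Sum>j. (1-lam) * lam^j * p (a j))"
    using LIMSEQ_subseq_LIMSEQ[OF cs sm] by (simp add: o_def)
  define Bz where "Bz = \<bar>fA\<bar> + \<bar>fB\<bar>"
  have l2: "(\<lambda>t. x - lam^(N0 + t*L) * z t) \<longlonglongrightarrow> x"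
  proof -
    have "(\<lambda>t. lam^(N0 + t*L) * z t) \<longlonglongrightarrow> 0"
    proof (rule Lim_null_comparison)
      show "\<forall>\<^sub>F t in sequentially. norm (lam^(N0 + t*L) * z t) \<le> Bz * lam^t"
      proof (rule always_eventually, rule allI)
        fix t
        have "fA \<le> z t" "z t \<le> fB" using zK by auto
        then have zb: "\<bar>z t\<bar> \<le> Bz" unfolding Bz_def by linarith
        have "t \<le> t*L" using L_pos by simp
        then have "t \<le> N0 + t*L" by linarith
        then have lb: "lam^(N0 + t*L) \<le> lam^t" using lam0 lam1 by (intro power_decreasing) auto
        have "norm (lam^(N0 + t*L) * z t) = lam^(N0 + t*L) * \<bar>z t\<bar>" using lam0 by (simp add: abs_mult)
        also have "\<dots> \<le> lam^t * Bz" using lb zb lam0 by (intro mult_mono) auto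
        finally show "norm (lam^(N0 + t*L) * z t) \<le> Bz * lam^t" by (simp add: mult.commute)
      qed
      show "(\<lambda>t. Bz * lam^t) \<longlonglongrightarrow> 0"
        using tendsto_mult[OF tendsto_const LIMSEQ_power_zero[of lam]] lam0 lam1 by simp
    qed
    then show ?thesis using tendsto_diff[OF tendsto_const[of x]] by fastforce
  qed
  have "(\<Sum>j. (1-lam) * lam^j * p (a j)) = x"
    using LIMSEQ_unique[OF l1] l2 sub0 by simp
  then have cx: "coding S a = x" using cd by simp
  have sn: "simply_normal n k a"
    unfolding simply_normal_def block_count_def
  proof (intro allI impI)
    fix b :: "nat list" assume b: "length b = k \<and> set b \<subseteq> {0..n}"
    define P where "P x = (\<forall>i<k. Cc (x+i) = b!i)" for x
    have Pper: "\<forall>x. P (x + L) = P x" unfolding P_def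
      by (metis Cc_per add.commute add.left_commute)
    have per: "\<forall>t. card {s. s < L \<and> (\<forall>i<length b. a (N0 + t*L + s + i) = b!i)} = k"
    proof
      fix t
      have "{s. s < L \<and> (\<forall>i<length b. a (N0 + t*L + s + i) = b!i)} = {s. s < L \<and> P (s + e t)}"
      proof -
        have "a (N0 + t*L + s + i) = Cc ((s + e t) + i)" if "s < L" "i < k" for s i
        proof -
          have "a (N0 + t*L + s + i) = aseq e (t*L + s + i)" using tail
            by (metis add.assoc)
          also have "\<dots> = Cc (s + i + e t)" by (rule aseq_win[OF e that])
          finally show ?thesis by (simp add: ac_simps)
        qed
        then show ?thesis unfolding P_def using b by auto
      qed
      also have "card \<dots> = card {s. s < L \<and> P s}" by (rule shift_card[OF L_pos Pper])
      also have "\<dots> = k" unfolding P_def using balance b by blast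
      finally show "card {s. s < L \<and> (\<forall>i<length b. a (N0 + t*L + s + i) = b!i)} = k" .
    qed
    have "(\<lambda>m. real (card {j. j < m \<and> (\<forall>i<length b. a (j + i) = b!i)}) / real m) \<longlonglongrightarrow> real k / real L"
      by (rule freq_lemma[OF L_pos]) (use per in \<open>simp add: add.assoc\<close>)
    moreover have "real k / real L = 1 / real (n+1) ^ k"
      unfolding L_def q_def using k0 by simp
    ultimately show "(\<lambda>m. real (card {j. j < m \<and> (\<forall>i<length b. a (j + i) = b ! i)}) / real m)
      \<longlonglongrightarrow> 1 / real (n + 1) ^ k" by simp
  qed
  show ?thesis using dig sn cx by blast
qed

end

context hsetup
begin

lemma lam_half: "lam > 1/2"
  using lam_ge_r[of 1] r_gt L_pos by simp

lemma missing_digit_not_normal: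
  assumes d: "d \<le> n" and nd: "\<forall>j. a j \<noteq> d"
  shows "\<not> simply_normal n k a"
proof
  assume sn: "simply_normal n k a"
  have b: "length (replicate k d) = k \<and> set (replicate k d) \<subseteq> {0..n}" using d by auto
  have lim: "(\<lambda>mm. real (block_count (replicate k d) a mm) / real mm) \<longlonglongrightarrow> 1 / real (n + 1) ^ k"
    using sn b unfolding simply_normal_def by blast
  have "block_count (replicate k d) a mm = 0" for mm
  proof -
    have "{j. j < mm \<and> (\<forall>i<length (replicate k d). a (j + i) = replicate k d ! i)} = {}"
    proof (rule ccontr)
      assume "{j. j < mm \<and> (\<forall>i<length (replicate k d). a (j + i) = replicate k d ! i)} \<noteq> {}"
      then obtain j where "\<forall>i<k. a (j + i) = replicate k d ! i" by auto
      then have "a (j + 0) = d" using k0 by auto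
      then show False using nd by simp
    qed
    then show ?thesis unfolding block_count_def by simp
  qed
  then have "(\<lambda>mm. real (block_count (replicate k d) a mm) / real mm) \<longlonglongrightarrow> 0" by simp
  then have "1 / real (n + 1) ^ k = (0::real)" using LIMSEQ_unique lim by blast
  then show False by simp
qed

lemma coding_const_value:
  assumes dig: "\<forall>j. a j \<le> n" and c: "coding S a = v" and sg: "sg \<noteq> (0::real)"
    and sgn: "\<forall>j. 0 \<le> sg * ((1-lam) * lam^j * (p (a j) - v))"
  shows "\<forall>j. p (a j) = v"
proof -
  have s: "(\<lambda>j. (1-lam) * lam^j * p (a j)) sums v"
    using coding_sums[OF dig, of lam p] lam0 lam1 c by (simp add: sums_iff)
  have g: "(\<lambda>j. ((1-lam) * v) * lam^j) sums ((1-lam) * v * (1 / (1 - lam)))"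
    using geometric_sums[of lam] lam0 lam1 by (intro sums_mult) auto
  have "(1-lam) * v * (1 / (1 - lam)) = v" using lam1 by simp
  then have g': "(\<lambda>j. (1-lam) * lam^j * v) sums v" using g by (simp add: ac_simps)
  have "(\<lambda>j. (1-lam) * lam^j * p (a j) - (1-lam) * lam^j * v) sums (v - v)"
    by (rule sums_diff[OF s g'])
  then have f: "(\<lambda>j. (1-lam) * lam^j * (p (a j) - v)) sums 0" by (simp add: algebra_simps)
  then have "(\<lambda>j. sg * ((1-lam) * lam^j * (p (a j) - v))) sums (sg * 0)" by (rule sums_mult)
  then have f2: "(\<lambda>j. sg * ((1-lam) * lam^j * (p (a j) - v))) sums 0" by simp
  then have "\<forall>j. sg * ((1-lam) * lam^j * (p (a j) - v)) = 0"
    using suminf_eq_zero_iff[of "\<lambda>j. sg * ((1-lam) * lam^j * (p (a j) - v))"] sgn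
    by (simp add: sums_iff)
  then show ?thesis using lam0 lam1 sg by simp
qed

lemma endpoints:
  assumes dig: "\<forall>j. a j \<le> n" and sn: "simply_normal n k a"
  shows "coding S a \<noteq> m" "coding S a \<noteq> M"
proof -
  show "coding S a \<noteq> m"
  proof
    assume c: "coding S a = m"
    have h: "\<forall>j. 0 \<le> 1 * ((1-lam) * lam^j * (p (a j) - m))" using pr dig lam0 lam1 by auto
    have "\<forall>j. p (a j) = m" by (rule coding_const_value[OF dig c _ h]) simp
    then have "\<forall>j. a j \<noteq> i1" using pi1 mM by auto
    then show False using missing_digit_not_normal[OF i1] sn by blast
  qed
  show "coding S a \<noteq> M"
  proof
    assume c: "coding S a = M"
    have h: "\<forall>j. 0 \<le> (-1) * ((1-lam) * lam^j * (p (a j) - M))"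
    proof
      fix j
      have "0 \<le> (1-lam) * lam^j * (M - p (a j))" using pr dig lam0 lam1 by auto
      then show "0 \<le> (-1) * ((1-lam) * lam^j * (p (a j) - M))" by (simp add: algebra_simps)
    qed
    have "\<forall>j. p (a j) = M" by (rule coding_const_value[OF dig c _ h]) simp
    then have "\<forall>j. a j \<noteq> i0" using pi0 mM by auto
    then show False using missing_digit_not_normal[OF i0] sn by blast
  qed
qed

lemma decomp:
  assumes z: "z \<in> {m..M}"
  shows "\<exists>d z'. d \<le> n \<and> z' \<in> {m..M} \<and> z = S d z'"
proof (cases "z - m \<le> lam * (M - m)")
  case True
  define z' where "z' = m + (z - m) / lam"
  have "S i0 z' = z" unfolding z'_def hIFS_def using pi0 lam0 by (simp add: field_simps)
  moreover have "z' \<in> {m..M}"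
  proof -
    have "(z - m) / lam \<le> M - m" using True lam0 by (simp add: divide_le_eq mult.commute)
    moreover have "0 \<le> (z - m) / lam" using z lam0 by simp
    ultimately show ?thesis unfolding z'_def by simp
  qed
  ultimately show ?thesis using i0 by metis
next
  case False
  define z' where "z' = M - (M - z) / lam"
  have "S i1 z' = z" unfolding z'_def hIFS_def using pi1 lam0 by (simp add: field_simps)
  moreover have "z' \<in> {m..M}"
  proof -
    have "M - z < (1 - lam) * (M - m)" using False by (simp add: algebra_simps)
    also have "\<dots> \<le> lam * (M - m)" using lam_half mM by (intro mult_right_mono) auto
    finally have "(M - z) / lam \<le> M - m" using lam0 by (simp add: divide_le_eq mult.commute)
    moreover have "0 \<le> (M - z) / lam" using z lam0 by simp
    ultimately show ?thesis unfolding z'_def by simp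
  qed
  ultimately show ?thesis using i1 by metis
qed

lemma S_maps: "i \<le> n \<Longrightarrow> y \<in> {m..M} \<Longrightarrow> S i y \<in> {m..M}"
proof -
  assume i: "i \<le> n" and y: "y \<in> {m..M}"
  have pi: "m \<le> p i" "p i \<le> M" using pr i by auto
  have "lam * m + (1-lam) * m \<le> lam * y + (1-lam) * p i"
    using y pi lam0 lam1 by (intro add_mono mult_left_mono) auto
  moreover have "lam * y + (1-lam) * p i \<le> lam * M + (1-lam) * M"
    using y pi lam0 lam1 by (intro add_mono mult_left_mono) auto
  ultimately show ?thesis unfolding hIFS_def by (simp add: algebra_simps)
qed

lemma iter_decomp:
  "z \<in> {m..M} \<Longrightarrow> \<exists>a zN. (\<forall>j. a j \<le> n) \<and> zN \<in> {m..M} \<and> z = comp_word S a N zN"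
proof (induction N arbitrary: z)
  case 0
  then show ?case by (intro exI[of _ "\<lambda>_. i0"] exI[of _ z]) (use i0 in auto)
next
  case (Suc N)
  obtain a zN where a: "\<forall>j. a j \<le> n" "zN \<in> {m..M}" "z = comp_word S a N zN" using Suc by blast
  obtain d z' where d: "d \<le> n" "z' \<in> {m..M}" "zN = S d z'" using decomp[OF a(2)] by blast
  define a' where "a' = a(N := d)"
  have "comp_word S a' (Suc N) z' = comp_word S a' N (S d z')" unfolding a'_def by simp
  also have "comp_word S a' N = comp_word S a N" by (rule cw_cong) (simp add: a'_def)
  finally have "comp_word S a' (Suc N) z' = z" using a d by simp
  moreover have "\<forall>j. a' j \<le> n" using a d unfolding a'_def by simp
  ultimately show ?case using d by blast
qed

lemma attractor_eq: "attractor S n = {m..M}"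
  unfolding attractor_def
proof (rule the_equality)
  show "compact {m..M} \<and> {m..M} \<noteq> {} \<and> {m..M} = (\<Union>i\<in>{0..n}. S i ` {m..M})"
  proof (intro conjI)
    show "compact {m..M}" by simp
    show "{m..M} \<noteq> {}" using mM by simp
    show "{m..M} = (\<Union>i\<in>{0..n}. S i ` {m..M})"
    proof
      show "{m..M} \<subseteq> (\<Union>i\<in>{0..n}. S i ` {m..M})"
      proof
        fix z assume "z \<in> {m..M}"
        then obtain d z' where "d \<le> n" "z' \<in> {m..M}" "z = S d z'" using decomp by blast
        then show "z \<in> (\<Union>i\<in>{0..n}. S i ` {m..M})" by (intro UN_I[of d]) auto
      qed
      show "(\<Union>i\<in>{0..n}. S i ` {m..M}) \<subseteq> {m..M}" using S_maps by auto
    qed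
  qed
next
  fix X assume X: "compact X \<and> X \<noteq> {} \<and> X = (\<Union>i\<in>{0..n}. S i ` X)"
  have inv: "S i x \<in> X" if "i \<le> n" "x \<in> X" for i x
  proof -
    have "S i x \<in> (\<Union>i\<in>{0..n}. S i ` X)" using that by auto
    then show ?thesis using X by blast
  qed
  have invw: "comp_word S a N x \<in> X" if "\<forall>j. a j \<le> n" "x \<in> X" for a N x
    using that
  proof (induction N arbitrary: x)
    case 0 then show ?case by simp
  next
    case (Suc N) then show ?case using inv by simp
  qed
  have sub: "X \<subseteq> {m..M}"
  proof -
    obtain s where s: "s \<in> X" "\<forall>t\<in>X. t \<le> s" using compact_attains_sup X by metis
    obtain s' where s': "s' \<in> X" "\<forall>t\<in>X. s' \<le> t" using compact_attains_inf X by metis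
    have "s \<in> (\<Union>i\<in>{0..n}. S i ` X)" using s X by blast
    then obtain i x where ix: "i \<le> n" "x \<in> X" "s = S i x" by auto
    have "s \<le> lam * s + (1 - lam) * M"
    proof -
      have "lam * x \<le> lam * s" using s ix lam0 by (intro mult_left_mono) auto
      moreover have "(1-lam) * p i \<le> (1-lam) * M" using pr ix lam1 by (intro mult_left_mono) auto
      ultimately show ?thesis using ix unfolding hIFS_def by simp
    qed
    then have "(1-lam) * s \<le> (1-lam) * M" by (simp add: algebra_simps)
    then have sM: "s \<le> M" using lam1 by (simp add: mult_le_cancel_left_pos)
    have "s' \<in> (\<Union>i\<in>{0..n}. S i ` X)" using s' X by blast
    then obtain i' x' where ix': "i' \<le> n" "x' \<in> X" "s' = S i' x'" by auto
    have "lam * s' + (1 - lam) * m \<le> s'"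
    proof -
      have "lam * s' \<le> lam * x'" using s' ix' lam0 by (intro mult_left_mono) auto
      moreover have "(1-lam) * m \<le> (1-lam) * p i'" using pr ix' lam1 by (intro mult_left_mono) auto
      ultimately show ?thesis using ix' unfolding hIFS_def by simp
    qed
    then have "(1-lam) * m \<le> (1-lam) * s'" by (simp add: algebra_simps)
    then have sm: "m \<le> s'" using lam1 by (simp add: mult_le_cancel_left_pos)
    show ?thesis
    proof
      fix x assume "x \<in> X"
      then have "x \<le> s" "s' \<le> x" using s s' by auto
      then show "x \<in> {m..M}" using sM sm by simp
    qed
  qed
  have sup: "{m..M} \<subseteq> X"
  proof
    fix z assume z: "z \<in> {m..M}"
    obtain x0 where x0: "x0 \<in> X" using X by blast
    have cl: "closed X" using X compact_imp_closed by blast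
    define B where "B = \<bar>x0\<bar> + \<bar>m\<bar> + \<bar>M\<bar> + 1"
    have B: "B > 0" unfolding B_def by simp
    have "\<forall>e>0. \<exists>y\<in>X. dist y z < e"
    proof (intro allI impI)
      fix e :: real assume e: "e > 0"
      obtain N where N: "lam^N < e / B" using real_arch_pow_inv[of "e / B" lam] e B lam1 by auto
      obtain a zN where a: "\<forall>j. a j \<le> n" "zN \<in> {m..M}" "z = comp_word S a N zN"
        using iter_decomp[OF z] by blast
      have yX: "comp_word S a N x0 \<in> X" using invw a x0 by blast
      have "dist (comp_word S a N x0) z = \<bar>lam^N * x0 - lam^N * zN\<bar>"
        unfolding dist_real_def a(3) using cw_affine[of lam p a N x0] cw_affine[of lam p a N zN] by simp
      also have "\<dots> = lam^N * \<bar>x0 - zN\<bar>" using lam0 by (simp add: abs_mult right_diff_distrib[symmetric])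
      also have "\<dots> \<le> lam^N * B"
      proof -
        have "\<bar>x0 - zN\<bar> \<le> B" using a(2) unfolding B_def by (auto simp: abs_le_iff)
        then show ?thesis using lam0 by (intro mult_left_mono) auto
      qed
      also have "\<dots> < e" using N B by (simp add: field_simps)
      finally show "\<exists>y\<in>X. dist y z < e" using yX by blast
    qed
    then show "z \<in> X" using closed_approachable[OF cl] by blast
  qed
  show "X = {m..M}" using sub sup by blast
qed

end

theorem theorem6p2:
  fixes p :: "nat \<Rightarrow> real" and n k :: nat and lam :: real
  assumes "\<exists>i\<le>n. \<exists>j\<le>n. p i \<noteq> p j"
    and "k \<ge> 1"
    and "max ((1/2) powr (1 / (real k * real (n + 1) ^ k))) (pisot_theta powr (-1/2)) < lam"
    and "lam < 1"
  shows "Xk (hIFS lam p) n k = interior (attractor (hIFS lam p) n)"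
proof -
  obtain i j where ij: "i \<le> n" "j \<le> n" "p i \<noteq> p j" using assms(1) by blast
  define m where "m = Min (p ` {0..n})"
  define M where "M = Max (p ` {0..n})"
  have fin: "finite (p ` {0..n})" "p ` {0..n} \<noteq> {}" by auto
  have "m \<in> p ` {0..n}" unfolding m_def using fin by (rule Min_in)
  then obtain i0 where i0: "i0 \<le> n" "p i0 = m" by auto
  have "M \<in> p ` {0..n}" unfolding M_def using fin by (rule Max_in)
  then obtain i1 where i1: "i1 \<le> n" "p i1 = M" by auto
  have pr: "\<forall>i\<le>n. m \<le> p i \<and> p i \<le> M"
    unfolding m_def M_def using fin by auto
  have mM: "m < M"
  proof -
    have "m \<le> p i" "p i \<le> M" "m \<le> p j" "p j \<le> M" using pr ij by auto
    then show ?thesis using ij(3) by linarith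
  qed
  have k0: "k > 0" using assms(2) by simp
  define Lr where "Lr = k * (n+1)^k"
  have Lr0: "Lr > 0" unfolding Lr_def using k0 by simp
  have rLr: "real Lr = real k * real (n + 1) ^ k" unfolding Lr_def by simp
  define c where "c = (1/2::real) powr (1 / real Lr)"
  have c0: "c > 0" unfolding c_def by simp
  have clam: "c < lam" using assms(3) unfolding c_def rLr by simp
  have lam0: "lam > 0" using c0 clam by simp
  have "c ^ Lr = c powr real Lr" using c0 by (simp add: powr_realpow)
  also have "\<dots> = (1/2) powr (1 / real Lr * real Lr)" unfolding c_def by (simp add: powr_powr)
  also have "\<dots> = 1/2" using Lr0 by simp
  finally have cL: "c ^ Lr = 1/2" .
  have "c ^ Lr < lam ^ Lr" using clam c0 Lr0 by (intro power_strict_mono) auto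
  then have rL: "lam ^ (k * (n+1)^k) > 1/2" using cL unfolding Lr_def by simp
  interpret hsetup p n k lam m M i0 i1
    using k0 lam0 assms(4) rL i0 i1 mM pr by unfold_locales auto
  have "Xk (hIFS lam p) n k = {m<..<M}"
  proof
    show "Xk (hIFS lam p) n k \<subseteq> {m<..<M}"
    proof
      fix x assume x: "x \<in> Xk (hIFS lam p) n k"
      then have xa: "x \<in> {m..M}" using attractor_eq unfolding Xk_def by auto
      obtain a where a: "\<forall>j. a j \<le> n" "simply_normal n k a" "coding (hIFS lam p) a = x"
        using x unfolding Xk_def by auto
      have "x \<noteq> m" "x \<noteq> M" using endpoints[OF a(1) a(2)] a(3) by auto
      then show "x \<in> {m<..<M}" using xa by auto
    qed
    show "{m<..<M} \<subseteq> Xk (hIFS lam p) n k"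
    proof
      fix x assume x: "x \<in> {m<..<M}"
      then obtain a where "\<forall>j. a j \<le> n" "simply_normal n k a" "coding (hIFS lam p) a = x"
        using interior_good by auto
      moreover have "x \<in> attractor (hIFS lam p) n" using attractor_eq x by auto
      ultimately show "x \<in> Xk (hIFS lam p) n k" unfolding Xk_def by auto
    qed
  qed
  also have "\<dots> = interior (attractor (hIFS lam p) n)"
    using attractor_eq by (simp add: interior_atLeastAtMost_real)
  finally show ?thesis .
qed

end
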